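(* There exists a decreasing sequence $(T_k)_{k\in\mathbb{N}}$ of compact subsets of $\mathbb{R}^2$ such that: (i) $T_0$ is the closed unit disk $\{x:\|x\|\le1\}$; (ii) $T_{k+1}\subset\operatorname{int}T_k$ for every $k\in\mathbb{N}$; (iii) $\bigcap_{k\in\mathbb{N}}T_k$ is the closed disk $\{x:\|x\|\le r\}$ for some $r>0$; (iv) $\sum_{k=0}^{+\infty}\operatorname{Dist}(T_k,T_{k+1})=+\infty$.
   Context: $\operatorname{Dist}(S_1,S_2)=\max\{\sup_{x\in S_1}\operatorname{dist}(x,S_2),\sup_{x\in S_2}\operatorname{dist}(x,S_1)\}$ is the Hausdorff distance, with $\operatorname{dist}(x,S)=\inf_{y\in S}\|x-y\|$. *)

theory Defs
  imports "HOL-Analysis.Analysis"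
begin

definition Hdist :: "'a::metric_space set \<Rightarrow> 'a set \<Rightarrow> real" where
  "Hdist S1 S2 = max (SUP x\<in>S1. infdist x S2) (SUP x\<in>S2. infdist x S1)"

end

theory Submission
  imports Defs "HOL-Library.Discrete_Functions"
begin

definition sp :: "nat \<Rightarrow> real" where "sp n = 1 / (20 * (real n + 1) * 2^n)"
definition hh :: "nat \<Rightarrow> real" where "hh n = 1 / (5 * 2^n)"
definition pp :: "nat \<Rightarrow> real^2" where
  "pp k = vector [real (k - 2^(floor_log k)) * sp (floor_log k), 1/2 + hh (floor_log k)]"
definition aa :: "nat \<Rightarrow> real" where "aa k = 1/2 + 1 / (20 * real k)"
definition bb :: "nat \<Rightarrow> real" where "bb k = 1 / (40 * (real k + 1)^2)"
definition TT :: "nat \<Rightarrow> (real^2) set" where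
  "TT k = (if k = 0 then cball 0 1 else cball 0 (aa k) \<union> (\<Union>m\<in>{k..}. cball (pp m) (bb k)))"

lemma pow_ge: "real n + 1 \<le> 2 ^ n"
proof (induction n)
  case (Suc n) then show ?case by simp
qed simp

lemma fl_bounds: assumes "k \<ge> 1" shows "2 ^ floor_log k \<le> k" "k < 2 * 2 ^ floor_log k"
  using floor_log_exp2_le[of k] floor_log_exp2_gt[of k] assms by auto

lemma pp_norm_le: "norm (pp m) \<le> 1/2 + 1 / (4 * (real (floor_log m) + 1))"
proof -
  define n where "n = floor_log m"
  have c1: "real (m - 2^n) * sp n \<le> 1 / (20 * (real n + 1))"
  proof (cases "m = 0")
    case True then show ?thesis by simp
  next
    case False
    then have "m < 2 * 2^n" using fl_bounds[of m] n_def by auto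
    then have "m - 2^n \<le> (2::nat)^n" by linarith
    then have "real (m - 2^n) \<le> real ((2::nat)^n)" by (rule of_nat_mono)
    then have "real (m - 2^n) \<le> 2^n" by simp
    then have "real (m - 2^n) * sp n \<le> 2^n * sp n" by (intro mult_right_mono) (auto simp: sp_def)
    also have "\<dots> = 1 / (20 * (real n + 1))" by (simp add: sp_def)
    finally show ?thesis .
  qed
  have c2: "hh n \<le> 1 / (5 * (real n + 1))"
    unfolding hh_def using pow_ge[of n] by (intro divide_left_mono) auto
  have "norm (pp m) \<le> \<bar>pp m $ 1\<bar> + \<bar>pp m $ 2\<bar>"
    using norm_le_l1_cart[of "pp m"] by (simp add: sum_2)
  also have "\<dots> = real (m - 2^n) * sp n + (1/2 + hh n)"
    by (simp add: pp_def n_def sp_def hh_def)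
  also have "\<dots> \<le> 1/2 + 1 / (4 * (real n + 1))" using c1 c2 by (simp add: field_simps)
  finally show ?thesis by (simp add: n_def)
qed

lemma pp_norm_ge: "norm (pp m) \<ge> 1/2 + hh (floor_log m)"
  using component_le_norm_cart[of "pp m" 2] by (simp add: pp_def hh_def)


lemma pp_sep: assumes "1 \<le> k" "k < m" shows "norm (pp k - pp m) \<ge> sp (floor_log k)"
proof -
  define n where "n = floor_log k"
  define n' where "n' = floor_log m"
  have nn: "n \<le> n'" unfolding n_def n'_def using floor_log_le_iff assms by simp
  show ?thesis
  proof (cases "n = n'")
    case True
    have k1: "2^n \<le> k" using fl_bounds[of k] assms n_def by auto
    have e: "real (m - 2^n) - real (k - 2^n) = real m - real k" using k1 assms by (simp add: of_nat_diff)
    have d: "1 \<le> real (m - 2^n) - real (k - 2^n)" unfolding e using assms by simp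
    have sp0: "0 \<le> sp n" by (simp add: sp_def)
    have "1 * sp n \<le> (real (m - 2^n) - real (k - 2^n)) * sp n"
      by (rule mult_right_mono[OF d sp0])
    then have "sp n \<le> \<bar>(pp k - pp m) $ 1\<bar>"
      using True by (simp add: pp_def n_def n'_def[symmetric] algebra_simps)
    then show ?thesis using component_le_norm_cart[of "pp k - pp m" 1] n_def unfolding n_def[symmetric] by linarith
  next
    case False
    then have "Suc n \<le> n'" using nn by simp
    then have "(2::real)^(Suc n) \<le> 2^n'" by (intro power_increasing) auto
    then have "hh n' \<le> hh (Suc n)" unfolding hh_def by (intro divide_left_mono) auto
    moreover have "hh n - hh (Suc n) = 1 / (10 * 2^n)" by (simp add: hh_def field_simps)
    moreover have "sp n \<le> 1 / (10 * 2^n)" unfolding sp_def by (intro divide_left_mono) auto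
    moreover have "(pp k - pp m) $ 2 = hh n - hh n'" by (simp add: pp_def n_def n'_def)
    ultimately have "sp n \<le> \<bar>(pp k - pp m) $ 2\<bar>" by simp
    then show ?thesis using component_le_norm_cart[of "pp k - pp m" 2] n_def unfolding n_def[symmetric] by linarith
  qed
qed

lemma TT_bound: assumes "k \<ge> 1" shows "TT k \<subseteq> cball 0 (1/2 + 3 / (10 * (real (floor_log k) + 1)))"
proof
  fix x assume x: "x \<in> TT k"
  define n where "n = floor_log k"
  have nk: "real n + 1 \<le> real k" using pow_ge[of n] fl_bounds[of k] assms n_def
    by (metis of_nat_le_iff of_nat_numeral of_nat_power order.trans)
  have bb: "bb k \<le> 1 / (20 * (real n + 1))"
  proof -
    have "real k \<le> (real k + 1)^2"
      using mult_nonneg_nonneg[of "real k" "real k"] by (simp add: power2_eq_square algebra_simps)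
    then have h: "20 * (real n + 1) \<le> 40 * (real k + 1)^2" using nk zero_le_power2[of "real k + 1"]
      by argo
    show ?thesis unfolding bb_def by (rule divide_left_mono[OF h]) auto
  qed
  show "x \<in> cball 0 (1/2 + 3 / (10 * (real n + 1)))" unfolding n_def[symmetric]
  proof (cases "x \<in> cball 0 (aa k)")
    case True
    have "aa k \<le> 1/2 + 3 / (10 * (real n + 1))" unfolding aa_def
      using nk by (simp add: field_simps)
    then show ?thesis using True by auto
  next
    case False
    then obtain m where m: "m \<ge> k" "x \<in> cball (pp m) (bb k)" using x assms by (auto simp: TT_def)
    have "floor_log k \<le> floor_log m" using floor_log_le_iff m by simp
    then have "1 / (4 * (real (floor_log m) + 1)) \<le> 1 / (4 * (real n + 1))"
      unfolding n_def by (intro divide_left_mono) auto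
    then have "norm (pp m) \<le> 1/2 + 1 / (4 * (real n + 1))" using pp_norm_le[of m] by linarith
    moreover have "norm x \<le> norm (pp m) + bb k" using m(2) norm_triangle_sub[of x "pp m"]
      by (auto simp: dist_norm norm_minus_commute)
    ultimately have "norm x \<le> 1/2 + 1 / (4 * (real n + 1)) + 1 / (20 * (real n + 1))" using bb by linarith
    also have "\<dots> = 1/2 + 3 / (10 * (real n + 1))"
      by (simp add: add_divide_distrib[symmetric] divide_simps) (simp add: algebra_simps)
    finally show ?thesis by simp
  qed
qed


lemma TT_finite: assumes "k \<ge> 1"
  shows "TT k = cball 0 (aa k) \<union> (\<Union>m\<in>{k..<2^(10*k)}. cball (pp m) (bb k))"
proof -
  have big: "cball (pp m) (bb k) \<subseteq> cball 0 (aa k)" if m: "2^(10*k) \<le> m" for m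
  proof
    fix x assume x: "x \<in> cball (pp m) (bb k)"
    have "floor_log (2^(10*k)) \<le> floor_log m" using floor_log_le_iff m by blast
    then have fl: "real (10*k) \<le> real (floor_log m)" by simp
    have kpos: "real k \<ge> 1" using assms by simp
    have "1 / (4 * (real (floor_log m) + 1)) \<le> 1 / (4 * (real (10*k) + 1))"
      using fl by (intro divide_left_mono) auto
    also have "\<dots> \<le> 1 / (40 * real k)" using kpos by (intro divide_left_mono) auto
    finally have n1: "norm (pp m) \<le> 1/2 + 1 / (40 * real k)" using pp_norm_le[of m] by linarith
    have "40 * real k \<le> 40 * (real k + 1)^2"
      using mult_nonneg_nonneg[of "real k" "real k"] by (simp add: power2_eq_square algebra_simps)
    then have n2: "bb k \<le> 1 / (40 * real k)" unfolding bb_def using kpos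
      by (intro divide_left_mono) auto
    have "norm x \<le> norm (pp m) + bb k" using x norm_triangle_sub[of x "pp m"]
      by (auto simp: dist_norm norm_minus_commute)
    also have "\<dots> \<le> 1/2 + 1 / (40 * real k) + 1 / (40 * real k)" using n1 n2 by linarith
    also have "\<dots> = aa k" unfolding aa_def using kpos by (simp add: field_simps)
    finally show "x \<in> cball 0 (aa k)" by simp
  qed
  show ?thesis
  proof
    show "TT k \<subseteq> cball 0 (aa k) \<union> (\<Union>m\<in>{k..<2^(10*k)}. cball (pp m) (bb k))"
    proof
      fix x assume "x \<in> TT k"
      then consider "x \<in> cball 0 (aa k)" | m where "m \<ge> k" "x \<in> cball (pp m) (bb k)"
        using assms by (auto simp: TT_def)
      then show "x \<in> cball 0 (aa k) \<union> (\<Union>m\<in>{k..<2^(10*k)}. cball (pp m) (bb k))"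
      proof cases
        case 2
        then show ?thesis using big[of m] by (cases "m < 2^(10*k)") auto
      qed auto
    qed
  next
    show "cball 0 (aa k) \<union> (\<Union>m\<in>{k..<2^(10*k)}. cball (pp m) (bb k)) \<subseteq> TT k"
      using assms by (auto simp: TT_def)
  qed
qed

lemma TT_compact: "compact (TT k)"
proof (cases "k = 0")
  case True then show ?thesis by (simp add: TT_def)
next
  case False
  then show ?thesis using TT_finite[of k]
    by (simp add: compact_Un compact_UN)
qed

lemma TT_nest: "TT (Suc k) \<subseteq> interior (TT k)"
proof (cases "k = 0")
  case True
  have "TT (Suc k) \<subseteq> cball 0 (1/2 + 3 / (10 * (real (floor_log 1) + 1)))"
    using TT_bound[of 1] True by simp
  also have "\<dots> \<subseteq> ball 0 1" by auto
  finally show ?thesis using True by (simp add: TT_def)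
next
  case False
  define U where "U = ball 0 (aa k) \<union> (\<Union>m\<in>{k..}. ball (pp m) (bb k))"
  have "open U" unfolding U_def by auto
  moreover have "U \<subseteq> TT k" using False by (auto simp: U_def TT_def)
  moreover have "TT (Suc k) \<subseteq> U"
  proof
    fix x assume "x \<in> TT (Suc k)"
    then consider "x \<in> cball 0 (aa (Suc k))" | m where "m \<ge> Suc k" "x \<in> cball (pp m) (bb (Suc k))"
      by (auto simp: TT_def)
    then show "x \<in> U"
    proof cases
      case 1
      have "aa (Suc k) < aa k" using False unfolding aa_def by (simp add: frac_less2)
      then show ?thesis using 1 by (auto simp: U_def)
    next
      case 2
      have "bb (Suc k) < bb k" unfolding bb_def by (intro divide_strict_left_mono) (auto simp: power_strict_mono)
      then have "x \<in> ball (pp m) (bb k)" using 2(2) by simp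
      moreover have "m \<in> {k..}" using 2(1) by simp
      ultimately show ?thesis unfolding U_def by blast
    qed
  qed
  ultimately show ?thesis using interior_maximal by blast
qed

lemma TT_Inter: "(\<Inter>k. TT k) = cball 0 (1/2)"
proof
  show "cball 0 (1/2) \<subseteq> (\<Inter>k. TT k)"
  proof
    fix x :: "real^2" assume x: "x \<in> cball 0 (1/2)"
    show "x \<in> (\<Inter>k. TT k)"
    proof
      fix k
      have "1/2 \<le> aa k" by (simp add: aa_def)
      then show "x \<in> TT k" using x by (auto simp: TT_def)
    qed
  qed
next
  show "(\<Inter>k. TT k) \<subseteq> cball 0 (1/2)"
  proof
    fix x :: "real^2" assume x: "x \<in> (\<Inter>k. TT k)"
    show "x \<in> cball 0 (1/2)"
    proof (rule ccontr)
      assume "x \<notin> cball 0 (1/2)"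
      then have d: "norm x - 1/2 > 0" by simp
      obtain N :: nat where N: "3 / (norm x - 1/2) < real N" using reals_Archimedean2 by blast
      then have "3 / (norm x - 1/2) < 10 * (real N + 1)" using of_nat_0_le_iff[of N, where 'a=real] by argo
      then have Nb: "3 / (10 * (real N + 1)) < norm x - 1/2" using d
        by (simp add: field_simps)
      have "x \<in> TT (2^N)" using x by blast
      then have "norm x \<le> 1/2 + 3 / (10 * (real (floor_log (2^N)) + 1))"
        using TT_bound[of "2^N"] by auto
      then show False using Nb by simp
    qed
  qed
qed


lemma TT_Hdist: assumes "k \<ge> 1" shows "sp (floor_log k) / 2 \<le> Hdist (TT k) (TT (Suc k))"
proof -
  define n where "n = floor_log k"
  have k1: "2^n \<le> k" using fl_bounds[of k] assms n_def by auto
  then have k1r: "(2::real)^n \<le> real k"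
    by (metis of_nat_le_iff of_nat_numeral of_nat_power)
  have nk: "real n + 1 \<le> real k" using pow_ge[of n] k1r by linarith
  have spb: "sp n \<le> 1 / (20 * 2^n)" unfolding sp_def by (intro divide_left_mono) auto
  have "pp k \<in> cball (pp k) (bb k)" by (simp add: bb_def)
  then have "pp k \<in> (\<Union>m\<in>{k..}. cball (pp m) (bb k))" by blast
  then have pk: "pp k \<in> TT k" using assms by (simp add: TT_def)
  have ne: "TT (Suc k) \<noteq> {}"
  proof -
    have "(0::real^2) \<in> TT (Suc k)" by (simp add: TT_def aa_def)
    then show ?thesis by blast
  qed
  have lb: "sp n / 2 \<le> dist (pp k) y" if y: "y \<in> TT (Suc k)" for y
  proof -
    consider "norm y \<le> aa (Suc k)" | m where "m \<ge> Suc k" "y \<in> cball (pp m) (bb (Suc k))"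
      using y by (auto simp: TT_def)
    then show ?thesis
    proof cases
      case 1
      have h: "20 * (2::real)^n \<le> 20 * real (Suc k)" using k1r by (simp only: of_nat_Suc) argo
      have "1 / (20 * real (Suc k)) \<le> 1 / (20 * 2^n)" by (rule divide_left_mono[OF h]) auto
      then have "aa (Suc k) \<le> 1/2 + 1 / (20 * 2^n)" unfolding aa_def by simp
      moreover have "norm (pp k) \<ge> 1/2 + hh n" using pp_norm_ge[of k] n_def by simp
      moreover have "hh n = 4 * (1 / (20 * 2^n))" by (simp add: hh_def)
      moreover have "dist (pp k) y \<ge> norm (pp k) - norm y" 
        using norm_triangle_ineq2[of "pp k" y] by (simp add: dist_norm)
      moreover have "0 \<le> 1 / (20 * (2::real)^n)" by simp
      ultimately show ?thesis using 1 spb by linarith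
    next
      case 2
      have "sp n \<le> norm (pp k - pp m)" using pp_sep[of k m] assms 2(1) n_def by simp
      moreover have "norm (pp k - pp m) \<le> dist (pp k) y + dist y (pp m)"
        using dist_triangle[of "pp k" "pp m" y] by (simp add: dist_norm)
      moreover have "dist y (pp m) \<le> bb (Suc k)" using 2(2) by (simp add: dist_commute)
      moreover have "bb (Suc k) \<le> sp n / 2"
      proof -
        have "(real n + 1) * 2^n \<le> real k * real k" using nk k1r
          by (intro mult_mono) auto
        also have "\<dots> \<le> (real (Suc k) + 1)^2" by (simp add: power2_eq_square algebra_simps)
        finally have h: "40 * ((real n + 1) * 2^n) \<le> 40 * (real (Suc k) + 1)^2" by simp
        have "bb (Suc k) = 1 / (40 * (real (Suc k) + 1)^2)" by (simp add: bb_def)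
        also have "\<dots> \<le> 1 / (40 * ((real n + 1) * 2^n))"
          by (rule divide_left_mono[OF h]) auto
        also have "\<dots> = sp n / 2" by (simp add: sp_def)
        finally show ?thesis .
      qed
      ultimately show ?thesis by linarith
    qed
  qed
  have "sp n / 2 \<le> infdist (pp k) (TT (Suc k))"
    unfolding infdist_notempty[OF ne] by (rule cINF_greatest[OF ne lb])
  also have "\<dots> \<le> (SUP x\<in>TT k. infdist x (TT (Suc k)))"
  proof (rule cSUP_upper[OF pk], rule bdd_aboveI2)
    fix x assume x: "x \<in> TT k"
    have "3 / (10 * (real (floor_log k) + 1)) \<le> 3 / (10 * 1)"
      by (intro divide_left_mono) auto
    moreover have "norm x \<le> 1/2 + 3 / (10 * (real (floor_log k) + 1))" using TT_bound[OF assms] x by auto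
    ultimately have "norm x \<le> 1" by linarith
    have "(0::real^2) \<in> TT (Suc k)" by (simp add: TT_def aa_def)
    then show "infdist x (TT (Suc k)) \<le> 1" using \<open>norm x \<le> 1\<close> by (intro infdist_le2) auto
  qed
  also have "\<dots> \<le> Hdist (TT k) (TT (Suc k))" unfolding Hdist_def by simp
  finally show ?thesis by (simp add: n_def)
qed


lemma sp_anti: assumes "n \<le> n'" shows "sp n' \<le> sp n"
proof -
  have "(2::real)^n \<le> 2^n'" using assms by (intro power_increasing) auto
  then have "(real n + 1) * 2^n \<le> (real n' + 1) * 2^n'" using assms
    by (intro mult_mono) auto
  then have h: "20 * ((real n + 1) * 2^n) \<le> 20 * ((real n' + 1) * 2^n')" by simp
  have "1 / (20 * ((real n' + 1) * 2^n')) \<le> 1 / (20 * ((real n + 1) * 2^n))"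
    by (rule divide_left_mono[OF h]) auto
  then show ?thesis unfolding sp_def by (simp only: mult.assoc)
qed

lemma not_summ: "\<not> summable (\<lambda>k. sp (floor_log k) / 2)"
proof
  assume "summable (\<lambda>k. sp (floor_log k) / 2)"
  moreover have "summable (\<lambda>k. sp (floor_log k) / 2) \<longleftrightarrow>
      summable (\<lambda>n. 2^n * (sp (floor_log (2^n)) / 2))"
  proof (rule condensation_test)
    fix m :: nat
    show "sp (floor_log (Suc m)) / 2 \<le> sp (floor_log m) / 2"
      using sp_anti[of "floor_log m" "floor_log (Suc m)"] floor_log_le_iff[of m "Suc m"] by simp
  next
    fix n show "0 \<le> sp (floor_log n) / 2" by (simp add: sp_def)
  qed
  ultimately have "summable (\<lambda>n. 2^n * (sp (floor_log (2^n)) / 2))" by simp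
  moreover have "(\<lambda>n. 2^n * (sp (floor_log (2^n)) / 2)) = (\<lambda>n. (1/40) * inverse (of_nat (Suc n)))"
  proof (rule ext)
    fix n
    have A: "(2::real)^n \<noteq> 0" by simp
    have B: "real n + 1 \<noteq> 0" using of_nat_0_le_iff[of n, where 'a=real] by linarith
    have "2^n * (sp (floor_log (2^n)) / 2) = 2^n * (1 / (20 * (real n + 1) * 2^n) / 2)"
      by (simp add: sp_def)
    also have "\<dots> = 1 / (40 * (real n + 1))" using A B by (simp add: divide_simps)
    also have "\<dots> = (1/40) * inverse (of_nat (Suc n))" by (simp add: inverse_eq_divide add.commute)
    finally show "2^n * (sp (floor_log (2^n)) / 2) = (1/40) * inverse (of_nat (Suc n))" .
  qed
  ultimately have "summable (\<lambda>n. (1/40) * inverse (of_nat (Suc n) :: real))" by (simp only:)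
  then have "summable (\<lambda>n. 40 * ((1/40) * inverse (of_nat (Suc n) :: real)))" by (rule summable_mult)
  then have "summable (\<lambda>n. inverse (of_nat (Suc n) :: real))" by simp
  then have "summable (\<lambda>n. inverse (of_nat n) :: real)"
    using summable_Suc_iff[of "\<lambda>n. inverse (of_nat n) :: real"] by simp
  then show False using not_summable_harmonic by blast
qed

theorem lemma4p10:
  shows "\<exists>T :: nat \<Rightarrow> (real^2) set.
     decseq T \<and> (\<forall>k. compact (T k)) \<and>
     T 0 = cball 0 1 \<and>
     (\<forall>k. T (Suc k) \<subseteq> interior (T k)) \<and>
     (\<exists>r>0. (\<Inter>k. T k) = cball 0 r) \<and>
     (\<Sum>k. ennreal (Hdist (T k) (T (Suc k)))) = \<infinity>"
proof -
  have d: "decseq TT" unfolding decseq_Suc_iff using TT_nest interior_subset by blast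
  have c: "\<forall>k. compact (TT k)" using TT_compact by blast
  have z: "TT 0 = cball 0 1" by (simp add: TT_def)
  have n: "\<forall>k. TT (Suc k) \<subseteq> interior (TT k)" using TT_nest by blast
  have r: "\<exists>r>0. (\<Inter>k. TT k) = cball 0 r" using TT_Inter by (intro exI[of _ "1/2"]) auto
  define g where "g k = (if k = 0 then 0 else sp (floor_log k) / 2)" for k
  have g0: "0 \<le> g k" for k by (simp add: g_def sp_def)
  have "\<not> summable g"
  proof
    assume "summable g"
    then have "summable (\<lambda>k. g (Suc k))" using summable_Suc_iff[of g] by simp
    then have "summable (\<lambda>k. sp (floor_log (Suc k)) / 2)" by (simp add: g_def)
    then have "summable (\<lambda>k. sp (floor_log k) / 2)"
      using summable_Suc_iff[of "\<lambda>k. sp (floor_log k) / 2"] by simp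
    then show False using not_summ by blast
  qed
  then have top: "(\<Sum>k. ennreal (g k)) = top" using summable_iff_suminf_neq_top g0 by blast
  have "(\<Sum>k. ennreal (g k)) \<le> (\<Sum>k. ennreal (Hdist (TT k) (TT (Suc k))))"
  proof (rule suminf_le)
    fix k show "ennreal (g k) \<le> ennreal (Hdist (TT k) (TT (Suc k)))"
    proof (cases "k = 0")
      case True then show ?thesis by (simp add: g_def)
    next
      case False then show ?thesis using TT_Hdist[of k] by (intro ennreal_leI) (simp add: g_def)
    qed
  qed (rule summableI)+
  then have "(\<Sum>k. ennreal (Hdist (TT k) (TT (Suc k)))) = \<infinity>" using top by (simp add: top_unique)
  then show ?thesis using d c z n r by blast
qed

end
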